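(* Let $K$ be a field and let $L\in K^{n\times n}[s]$, $L_1\in K^{n_1\times n_1}[s]$ be nonsingular polynomial matrices. A map $\phi:U^L\to U^{L_1}$ is a $K_\infty(s)$-module homomorphism if and only if there exist matrices $\Theta,\Theta_1\in K^{n_1\times n}_\infty(s)$ such that $$\Theta L=L_1\Theta_1\qquad\text{and}\qquad \phi\bar x=\rho_e^{L_1}(\Theta\bar x)\ \text{ for all }\bar x\in U^L.$$ Moreover, if $\Theta,\Theta_1\in K^{n_1\times n}_\infty(s)$ satisfy $\Theta L=L_1\Theta_1$, then $\rho_e^{L_1}(\Theta\bar x)=\rho^{L_1}(\Theta x)$ for all $x\in K^n_\infty(s)$, where $\bar x=\rho^L x$.
   Context: $K(s)$ denotes the field of rational functions over $K$. A rational function $f$ is proper if $f=0$ or $f=p/q$ with $p,q\in K[s]$, $q\ne0$, $\deg p\le\deg q$; $K_\infty(s)$ is the ring of proper rational functions, and $K^n_\infty(s)$, $K^{m\times r}_\infty(s)$ denote vectors/matrices with proper rational entries. One has $K(s)=K[s]\oplus s^{-1}K_\infty(s)$; $\pi_+:K(s)\to K[s]$ denotes the projection onto the polynomial part along $s^{-1}K_\infty(s)$, extended entrywise to vectors and matrices. For a nonsingular $L\in K^{n\times n}[s]$, define $\rho^L:K^n_\infty(s)\to K^n[s]$ by $\rho^L x=L\,\pi_+(L^{-1}x)$, write $\bar x=\rho^Lx$, and let $U^L=\operatorname{Im}\rho^L$. Since $\operatorname{Ker}\rho^L=K^n_\infty(s)\cap s^{-1}LK^n_\infty(s)$, $U^L$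 is a $K_\infty(s)$-module via $q\cdot\bar x=\overline{qx}$ for $q\in K_\infty(s)$. The extension $\rho_e^{L_1}:K^{n_1}(s)\to K^{n_1}[s]$ is defined by $\rho_e^{L_1}w=L_1\pi_+(L_1^{-1}w)$ for $w\in K^{n_1}(s)$. *)

theory Defs
  imports "HOL-Analysis.Analysis" "HOL-Computational_Algebra.Computational_Algebra"
         
begin

type_synonym 'a ratf = "'a poly fract"

definition emb :: "'a::field poly \<Rightarrow> 'a ratf" where
  "emb p = Fract p 1"

definition proper :: "'a::field ratf \<Rightarrow> bool" where
  "proper f \<longleftrightarrow> f = 0 \<or> (\<exists>p q. q \<noteq> 0 \<and> f = Fract p q \<and> degree p \<le> degree q)"

text \<open>polynomial part pi_+ (projection along s^{-1} K_infty(s)): for f = p/q it is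
  the polynomial quotient p div q (independent of the chosen representation)\<close>
definition pi_plus :: "'a::field ratf \<Rightarrow> 'a ratf" where
  "pi_plus f = emb (SOME r. \<exists>p q. q \<noteq> 0 \<and> f = Fract p q \<and> r = p div q)"

definition pi_plus_vec :: "'a::field ratf ^'n \<Rightarrow> 'a ratf ^'n" where
  "pi_plus_vec v = (\<chi> i. pi_plus (v $ i))"

definition emb_mat :: "'a::field poly ^'n^'m \<Rightarrow> 'a ratf ^'n^'m" where
  "emb_mat L = (\<chi> i j. emb (L $ i $ j))"

definition proper_vecs :: "('a::field ratf ^'n) set" where
  "proper_vecs = {x. \<forall>i. proper (x $ i)}"

definition proper_mat :: "'a::field ratf ^'n^'m \<Rightarrow> bool" where
  "proper_mat T \<longleftrightarrow> (\<forall>i j. proper (T $ i $ j))"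

definition rho_e :: "'a::field poly ^'n^'n \<Rightarrow> 'a ratf ^'n \<Rightarrow> 'a ratf ^'n" where
  "rho_e L w = emb_mat L *v pi_plus_vec (matrix_inv (emb_mat L) *v w)"

text \<open>rho^L, meant to be applied to proper vectors only\<close>
definition rho :: "'a::field poly ^'n^'n \<Rightarrow> 'a ratf ^'n \<Rightarrow> 'a ratf ^'n" where
  "rho L x = emb_mat L *v pi_plus_vec (matrix_inv (emb_mat L) *v x)"

definition U :: "'a::field poly ^'n^'n \<Rightarrow> ('a ratf ^'n) set" where
  "U L = rho L ` proper_vecs"

definition act :: "'a::field poly ^'n^'n \<Rightarrow> 'a ratf \<Rightarrow> 'a ratf ^'n \<Rightarrow> 'a ratf ^'n" where
  "act L q xb = rho L (q *s (SOME x. x \<in> proper_vecs \<and> rho L x = xb))"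

definition Kinf_module_hom ::
  "'a::field poly ^'n^'n \<Rightarrow> 'a poly ^'m^'m \<Rightarrow> ('a ratf ^'n \<Rightarrow> 'a ratf ^'m) \<Rightarrow> bool" where
  "Kinf_module_hom L L1 \<phi> \<longleftrightarrow>
     (\<forall>xb\<in>U L. \<phi> xb \<in> U L1) \<and>
     (\<forall>xb\<in>U L. \<forall>yb\<in>U L. \<phi> (xb + yb) = \<phi> xb + \<phi> yb) \<and>
     (\<forall>q xb. proper q \<and> xb \<in> U L \<longrightarrow> \<phi> (act L q xb) = act L1 q (\<phi> xb))"

end

theory Submission
  imports Defs
begin

no_notation fps_nth (infixl "$" 75)

section \<open>Degree at infinity\<close>

lemma Fract_eq0_iff: "(q::'a::field poly) \<noteq> 0 \<Longrightarrow> Fract p q = 0 \<longleftrightarrow> p = 0"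
  by (simp add: Zero_fract_def eq_fract)

lemma nz_rep:
  assumes "(f::'a::field ratf) \<noteq> 0"
  obtains p q where "p \<noteq> 0" "q \<noteq> 0" "f = Fract p q"
proof -
  obtain p q where "q \<noteq> 0" "f = Fract p q" by (cases f) auto
  with assms Fract_eq0_iff[of q p] show ?thesis using that by auto
qed

lemma deg_rep_eq:
  fixes p q p' q' :: "'a::field poly"
  assumes "p \<noteq> 0" "q \<noteq> 0" "p' \<noteq> 0" "q' \<noteq> 0" "Fract p q = Fract p' q'"
  shows "int (degree p) - int (degree q) = int (degree p') - int (degree q')"
proof -
  have "p * q' = p' * q" using assms eq_fract(1) by blast
  hence "degree (p*q') = degree (p'*q)" by simp
  with assms show ?thesis by (simp add: degree_mult_eq)
qed

definition dg :: "'a::field ratf \<Rightarrow> int" where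
  "dg f = (SOME d. \<exists>p q. p \<noteq> 0 \<and> q \<noteq> 0 \<and> f = Fract p q \<and> d = int (degree p) - int (degree q))"

lemma dg_Fract:
  assumes "(p::'a::field poly) \<noteq> 0" "q \<noteq> 0"
  shows "dg (Fract p q) = int (degree p) - int (degree q)"
proof -
  have ex: "\<exists>d. \<exists>p' q'. p' \<noteq> 0 \<and> q' \<noteq> 0 \<and> Fract p q = Fract p' q' \<and> d = int (degree p') - int (degree q')"
    using assms by blast
  from someI_ex[OF ex] obtain p' q' where "p' \<noteq> 0" "q' \<noteq> 0" "Fract p q = Fract p' q'"
    "dg (Fract p q) = int (degree p') - int (degree q')" unfolding dg_def by blast
  with deg_rep_eq[OF assms this(1,2,3)] show ?thesis by simp
qed

definition ledg :: "int \<Rightarrow> 'a::field ratf \<Rightarrow> bool" where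
  "ledg k f \<longleftrightarrow> f = 0 \<or> dg f \<le> k"

abbreviation sp :: "'a::field ratf \<Rightarrow> bool" where "sp f \<equiv> ledg (-1) f"

lemma ledg_0[simp]: "ledg k 0" by (simp add: ledg_def)

lemma ledg_mono: "ledg k f \<Longrightarrow> k \<le> k' \<Longrightarrow> ledg k' f" by (auto simp: ledg_def)

lemma dg_mult:
  assumes "(f::'a::field ratf) \<noteq> 0" "g \<noteq> 0" shows "dg (f*g) = dg f + dg g"
proof -
  obtain p q where pq: "p \<noteq> 0" "q \<noteq> 0" "f = Fract p q" using nz_rep[OF assms(1)] by blast
  obtain p' q' where pq': "p' \<noteq> 0" "q' \<noteq> 0" "g = Fract p' q'" using nz_rep[OF assms(2)] by blast
  show ?thesis using pq pq' by (simp add: dg_Fract degree_mult_eq)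
qed

lemma ledg_mult: "ledg a f \<Longrightarrow> ledg b g \<Longrightarrow> ledg (a+b) (f*g)"
  by (cases "f = 0"; cases "g = 0") (auto simp: ledg_def dg_mult)

lemma dg_uminus: "dg (-(f::'a::field ratf)) = dg f"
proof (cases "f = 0")
  case False
  then obtain p q where pq: "p \<noteq> 0" "q \<noteq> 0" "f = Fract p q" using nz_rep by blast
  then show ?thesis by (simp add: dg_Fract)
qed simp

lemma ledg_uminus: "ledg k (-f) \<longleftrightarrow> ledg k f"
  by (auto simp: ledg_def dg_uminus)

lemma dg_add:
  assumes "(f::'a::field ratf) \<noteq> 0" "g \<noteq> 0" "f + g \<noteq> 0"
  shows "dg (f+g) \<le> max (dg f) (dg g)"
proof -
  obtain p q where pq: "p \<noteq> 0" "q \<noteq> 0" "f = Fract p q" using nz_rep[OF assms(1)] by blast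
  obtain p' q' where pq': "p' \<noteq> 0" "q' \<noteq> 0" "g = Fract p' q'" using nz_rep[OF assms(2)] by blast
  have s: "f + g = Fract (p*q' + p'*q) (q*q')" using pq pq' by simp
  have nz: "p*q' + p'*q \<noteq> 0" using s assms(3) pq pq' Fract_eq0_iff[of "q*q'"] by auto
  have "degree (p*q' + p'*q) \<le> max (degree (p*q')) (degree (p'*q))" by (rule degree_add_le_max)
  then show ?thesis using pq pq' nz s by (simp add: dg_Fract degree_mult_eq)
qed

lemma ledg_add: "ledg k f \<Longrightarrow> ledg k g \<Longrightarrow> ledg k (f+g)"
  using dg_add[of f g] by (cases "f = 0"; cases "g = 0"; cases "f+g = 0") (auto simp: ledg_def)

lemma ledg_diff: "ledg k f \<Longrightarrow> ledg k g \<Longrightarrow> ledg k (f-g)"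
  using ledg_add[of k f "-g"] by (simp add: ledg_uminus)

lemma ledg_sum: "(\<And>i. i \<in> S \<Longrightarrow> ledg k (f i)) \<Longrightarrow> ledg k (sum f S)"
  by (induction S rule: infinite_finite_induct) (auto intro: ledg_add)

lemma dg_inverse: "(f::'a::field ratf) \<noteq> 0 \<Longrightarrow> dg (inverse f) = - dg f"
proof -
  assume "f \<noteq> 0"
  then obtain p q where pq: "p \<noteq> 0" "q \<noteq> 0" "f = Fract p q" using nz_rep by blast
  then show ?thesis by (simp add: dg_Fract)
qed

lemma emb_nz: "emb p = 0 \<longleftrightarrow> p = 0"
  by (simp add: emb_def Fract_eq0_iff)

lemma dg_emb: "p \<noteq> 0 \<Longrightarrow> dg (emb p) = int (degree p)"
  by (simp add: emb_def dg_Fract)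

lemma emb_add: "emb (p + q) = emb p + emb q" by (simp add: emb_def)
lemma emb_mult: "emb (p * q) = emb p * emb q" by (simp add: emb_def)
lemma emb_diff: "emb (p - q) = emb p - emb q" by (simp add: emb_def)
lemma emb_uminus: "emb (- q) = - emb q" by (simp add: emb_def)
lemma emb_0[simp]: "emb 0 = 0" by (simp add: emb_def Zero_fract_def)
lemma emb_1[simp]: "emb 1 = 1" by (simp add: emb_def One_fract_def)

lemma emb_sp: "sp (emb p) \<Longrightarrow> p = 0"
  using dg_emb[of p] emb_nz[of p] by (auto simp: ledg_def)

lemma proper_iff: "proper f \<longleftrightarrow> ledg 0 f"
proof
  assume "proper f"
  then show "ledg 0 f" unfolding proper_def ledg_def
    by (metis Fract_eq0_iff dg_Fract diff_le_0_iff_le of_nat_le_iff)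
next
  assume "ledg 0 f"
  show "proper f"
  proof (cases "f = 0")
    case False
    then obtain p q where pq: "p \<noteq> 0" "q \<noteq> 0" "f = Fract p q" using nz_rep by blast
    with \<open>ledg 0 f\<close> False show ?thesis by (auto simp: proper_def ledg_def dg_Fract)
  qed (simp add: proper_def)
qed

section \<open>Polynomial part\<close>

lemma sp_mod:
  assumes "(q::'a::field poly) \<noteq> 0"
  shows "sp (Fract p q - emb (p div q))"
proof -
  have e: "Fract p q - emb (p div q) = Fract (p mod q) q"
    using assms by (simp add: emb_def minus_div_mult_eq_mod)
  show ?thesis
  proof (cases "p mod q = 0")
    case False
    with degree_mod_less'[OF assms False] assms show ?thesis
      by (simp add: e ledg_def dg_Fract)
  next
    case True
    have "Fract 0 q = 0" using Fract_eq0_iff[OF assms] by blast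
    with True show ?thesis by (simp add: e)
  qed
qed

lemma pi_plus_char:
  assumes "sp (f - emb a)"
  shows "pi_plus f = emb a"
proof -
  have all: "r = a" if "\<exists>p q. q \<noteq> 0 \<and> f = Fract p q \<and> r = p div q" for r
  proof -
    from that obtain p q where pq: "q \<noteq> 0" "f = Fract p q" "r = p div q" by blast
    have "sp (f - emb r)" using sp_mod[OF pq(1), of p] pq by simp
    hence "sp ((f - emb a) - (f - emb r))" using ledg_diff[OF assms] by blast
    moreover have "(f - emb a) - (f - emb r) = emb (r - a)" by (simp add: emb_diff)
    ultimately have "sp (emb (r - a))" by simp
    thus ?thesis using emb_sp by force
  qed
  obtain p q where "q \<noteq> 0" "f = Fract p q" by (cases f) auto
  hence ex: "\<exists>r. \<exists>p q. q \<noteq> 0 \<and> f = Fract p q \<and> r = p div q" by blast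
  show ?thesis unfolding pi_plus_def using all[OF someI_ex[OF ex]] by simp
qed

lemma pi_plus_ex: "\<exists>a. sp ((f::'a::field ratf) - emb a)"
proof -
  obtain p q where "q \<noteq> 0" "f = Fract p q" by (cases f) auto
  thus ?thesis using sp_mod by blast
qed

lemma sp_pi_plus: "sp (f - pi_plus f)"
  using pi_plus_ex[of f] pi_plus_char by metis

lemma pi_plus_add: "pi_plus (f + g) = pi_plus f + pi_plus g"
proof -
  obtain a b where "sp (f - emb a)" "sp (g - emb b)" using pi_plus_ex by metis
  hence "sp ((f+g) - emb (a+b))" using ledg_add by (fastforce simp: emb_add algebra_simps)
  thus ?thesis using \<open>sp (f - emb a)\<close> \<open>sp (g - emb b)\<close> pi_plus_char emb_add by metis
qed

lemma pi_plus_sp_iff: "pi_plus f = 0 \<longleftrightarrow> sp f"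
  using sp_pi_plus[of f] pi_plus_char[of f 0] by auto

lemma pi_plus_uminus: "pi_plus (-f) = - pi_plus f"
proof -
  have z: "pi_plus (0::'a ratf) = 0" using pi_plus_sp_iff[of "0::'a ratf"] by simp
  have "pi_plus f + pi_plus (-f) = 0" using pi_plus_add[of f "-f"] z by simp
  thus ?thesis by (metis add.commute add_eq_0_iff)
qed

lemma pi_plus_diff: "pi_plus (f - g) = pi_plus f - pi_plus g"
  using pi_plus_add[of f "-g"] pi_plus_uminus[of g] by simp

section \<open>Constants and value at infinity\<close>

definition cst :: "'a::field \<Rightarrow> 'a ratf" where "cst c = emb [:c:]"

lemma cst_add: "cst (a+b) = cst a + cst b" by (simp add: cst_def emb_add[symmetric])
lemma cst_mult: "cst (a*b) = cst a * cst b" by (simp add: cst_def emb_mult[symmetric]) (simp add: mult.commute)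
lemma cst_diff: "cst (a-b) = cst a - cst b" by (simp add: cst_def emb_diff[symmetric])
lemma cst_uminus: "cst (-a) = - cst a" by (simp add: cst_def emb_uminus[symmetric])
lemma cst_0[simp]: "cst 0 = 0" by (simp add: cst_def)
lemma cst_1[simp]: "cst 1 = 1" by (simp add: cst_def one_pCons[symmetric])

lemma cst_sp: "sp (cst c) \<Longrightarrow> c = 0"
  unfolding cst_def using emb_sp by fastforce

lemma ledg_cst: "ledg 0 (cst c)"
  by (cases "c = 0") (auto simp: cst_def ledg_def dg_emb emb_nz)

lemma ledg_emb_const: "ledg 0 (cst c)" by (rule ledg_cst)

definition ev :: "'a::field ratf \<Rightarrow> 'a" where "ev f = (SOME c. sp (f - cst c))"

lemma ev_ex:
  assumes "ledg 0 (f::'a::field ratf)" shows "\<exists>c. sp (f - cst c)"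
proof (cases "f = 0")
  case True thus ?thesis by (intro exI[of _ 0]) simp
next
  case False
  then obtain p q where pq: "p \<noteq> 0" "q \<noteq> 0" "f = Fract p q" using nz_rep by blast
  have dpq: "degree p \<le> degree q" using assms False pq by (simp add: ledg_def dg_Fract)
  define c where "c = coeff p (degree q) / lead_coeff q"
  define r where "r = p - smult c q"
  have fr: "f - cst c = Fract r q" using pq by (simp add: cst_def emb_def r_def)
  have cr: "coeff r (degree q) = 0" using pq by (simp add: r_def c_def)
  have dr: "degree r \<le> degree q" unfolding r_def using dpq
    by (meson degree_diff_le degree_smult_le le_trans)
  show ?thesis
  proof (cases "r = 0")
    case True
    hence "f - cst c = 0" using fr Fract_eq0_iff[OF pq(2)] by simp
    thus ?thesis by (metis ledg_0)
  next
    case False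
    have "degree r \<noteq> degree q" using cr False by (metis leading_coeff_0_iff)
    hence "degree r < degree q" using dr by simp
    thus ?thesis using fr False pq by (intro exI[of _ c]) (simp add: ledg_def dg_Fract)
  qed
qed

lemma proper_ev: "ledg 0 f \<Longrightarrow> sp (f - cst (ev f))"
  unfolding ev_def using ev_ex someI_ex by metis

lemma ev_unique:
  assumes "sp (f - cst c)" shows "ev f = c"
proof -
  have h: "ledg 0 (f - cst c)" using assms ledg_mono by fastforce
  have "ledg 0 f" using ledg_add[OF h ledg_cst[of c]] by simp
  hence "sp (f - cst (ev f))" by (rule proper_ev)
  hence "sp ((f - cst (ev f)) - (f - cst c))" using ledg_diff assms by blast
  hence "sp (cst (c - ev f))" by (simp add: cst_diff)
  thus ?thesis using cst_sp by force
qed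

lemma ev_add: "ledg 0 f \<Longrightarrow> ledg 0 g \<Longrightarrow> ev (f+g) = ev f + ev g"
  apply (rule ev_unique)
  using ledg_add[OF proper_ev proper_ev, of f g] by (simp add: cst_add algebra_simps)

lemma ev_mult:
  assumes f: "ledg 0 f" and g: "ledg 0 g" shows "ev (f*g) = ev f * ev g"
proof (rule ev_unique)
  let ?a = "cst (ev f)" and ?b = "cst (ev g)"
  have "f*g - cst (ev f * ev g) = (f - ?a) * g + ?a * (g - ?b)" by (simp add: cst_mult algebra_simps)
  moreover have "sp ((f - ?a) * g)" using ledg_mult[OF proper_ev[OF f] g] by simp
  moreover have "sp (?a * (g - ?b))" using ledg_mult[OF ledg_cst proper_ev[OF g]] by simp
  ultimately show "sp (f*g - cst (ev f * ev g))" using ledg_add by metis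
qed

lemma ev_cst[simp]: "ev (cst c) = c" by (rule ev_unique) simp
lemma ev_0[simp]: "ev 0 = 0" using ev_cst[of 0] by simp
lemma ev_1[simp]: "ev 1 = 1" using ev_cst[of 1] by simp
lemma ev_sp: "sp f \<Longrightarrow> ev f = 0" by (rule ev_unique) simp
lemma ev_uminus: "ledg 0 f \<Longrightarrow> ev (-f) = - ev f"
  using ev_add[of f "-f"] ledg_uminus[of 0 f] by (simp add: eq_neg_iff_add_eq_0 add.commute)

lemma sp_of_ev0: "ledg 0 f \<Longrightarrow> ev f = 0 \<Longrightarrow> sp f"
  using proper_ev[of f] by simp

lemma ev_sum: "(\<And>i. i \<in> S \<Longrightarrow> ledg 0 (f i)) \<Longrightarrow> ev (sum f S) = (\<Sum>i\<in>S. ev (f i))"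
  by (induction S rule: infinite_finite_induct) (auto simp: ev_add ledg_sum)

lemma ledg_prod: "(\<And>i. i \<in> S \<Longrightarrow> ledg 0 (f i)) \<Longrightarrow> ledg 0 (prod f S)"
proof (induction S rule: infinite_finite_induct)
  case (insert x F)
  then show ?case using ledg_mult[of 0 "f x" 0 "prod f F"] by simp
qed (auto simp: ledg_cst[of 1, simplified])

lemma ev_prod: "(\<And>i. i \<in> S \<Longrightarrow> ledg 0 (f i)) \<Longrightarrow> ev (prod f S) = (\<Prod>i\<in>S. ev (f i))"
  by (induction S rule: infinite_finite_induct) (auto simp: ev_mult ledg_prod)

lemma ev_nz:
  assumes "ledg 0 f" "ev f \<noteq> 0" shows "f \<noteq> 0" "dg f = 0" "ledg 0 (inverse f)"
proof -
  have sp1: "sp (f - cst (ev f))" using proper_ev[OF assms(1)] .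
  show nz: "f \<noteq> 0"
  proof
    assume "f = 0"
    hence "sp (- cst (ev f))" using sp1 by simp
    hence "sp (cst (ev f))" using ledg_uminus by blast
    thus False using cst_sp[of "ev f"] assms(2) by simp
  qed
  have "dg f \<le> 0" using assms(1) nz by (simp add: ledg_def)
  moreover have "\<not> dg f < 0"
  proof
    assume "dg f < 0"
    hence "sp f" by (simp add: ledg_def)
    hence "sp (f - (f - cst (ev f)))" using ledg_diff sp1 by blast
    thus False using cst_sp[of "ev f"] assms(2) by simp
  qed
  ultimately show dg0: "dg f = 0" by simp
  show "ledg 0 (inverse f)" using nz dg0 by (simp add: ledg_def dg_inverse)
qed

definition Xs :: "'a::field ratf" where "Xs = emb [:0,1:]"
definition xp :: "int \<Rightarrow> 'a::field ratf" where "xp k = Xs powi k"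

lemma Xs_nz: "Xs \<noteq> 0" by (simp add: Xs_def emb_nz)
lemma dg_Xs: "dg Xs = 1" by (simp add: Xs_def dg_emb)

lemma Xs_pow: "dg ((Xs::'a::field ratf) ^ n) = int n"
proof (induction n)
  case 0 thus ?case using dg_emb[of 1] by simp
next
  case (Suc n)
  have "(Xs::'a ratf) ^ n \<noteq> 0" by (simp add: Xs_nz)
  hence "dg ((Xs::'a ratf) * Xs ^ n) = dg (Xs::'a ratf) + dg ((Xs::'a ratf) ^ n)" by (simp add: dg_mult Xs_nz)
  thus ?case using Suc by (simp add: dg_Xs)
qed

lemma xp_nz: "xp k \<noteq> 0" by (simp add: xp_def Xs_nz)

lemma dg_xp: "dg (xp k :: 'a::field ratf) = k"
proof (cases "k \<ge> 0")
  case True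
  then obtain n where "k = int n" by (metis nonneg_eq_int)
  thus ?thesis using Xs_pow by (simp add: xp_def)
next
  case False
  then obtain n where n: "k = - int n" by (metis nonpos_int_cases not_le order.strict_implies_order)
  have "(xp k :: 'a ratf) = inverse (Xs ^ n)" by (simp add: xp_def n power_int_minus)
  have "(Xs::'a ratf) ^ n \<noteq> 0" by (simp add: Xs_nz)
  hence "dg (inverse ((Xs::'a ratf) ^ n)) = - int n" by (simp add: dg_inverse Xs_pow)
  thus ?thesis using n \<open>xp k = _\<close> by simp
qed

lemma xp_add: "xp (a + b) = xp a * xp b" by (simp add: xp_def power_int_add Xs_nz)
lemma xp_0[simp]: "xp 0 = 1" by (simp add: xp_def)

lemma ledg_xp: "ledg k (xp k)" by (simp add: ledg_def dg_xp)

lemma ledg_mult_xp: "ledg k f \<Longrightarrow> ledg (k + j) (f * xp j)"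
  using ledg_mult[OF _ ledg_xp] by blast

definition pv :: "'a::field ratf ^'n \<Rightarrow> bool" where "pv x \<longleftrightarrow> (\<forall>i. ledg 0 (x$i))"
definition spv :: "'a::field ratf ^'n \<Rightarrow> bool" where "spv x \<longleftrightarrow> (\<forall>i. sp (x$i))"
definition pm :: "'a::field ratf ^'n^'m \<Rightarrow> bool" where "pm A \<longleftrightarrow> (\<forall>i j. ledg 0 (A$i$j))"

lemma proper_vecs_iff: "x \<in> proper_vecs \<longleftrightarrow> pv x"
  by (simp add: proper_vecs_def pv_def proper_iff)

lemma proper_mat_iff: "proper_mat A \<longleftrightarrow> pm A"
  by (simp add: proper_mat_def pm_def proper_iff)

lemma ledg_mv:
  assumes "\<And>i j. ledg a (A$i$j)" "\<And>j. ledg b (x$j)"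
  shows "ledg (a+b) ((A *v x)$i)"
  unfolding matrix_vector_mult_def using assms by (auto intro!: ledg_sum ledg_mult)

lemma ledg_mm:
  assumes "\<And>i j. ledg a (A$i$j)" "\<And>i j. ledg b (B$i$j)"
  shows "ledg (a+b) ((A ** B)$i$j)"
  unfolding matrix_matrix_mult_def using assms by (auto intro!: ledg_sum ledg_mult)

lemma pv_mv: "pm A \<Longrightarrow> pv x \<Longrightarrow> pv (A *v x)"
  using ledg_mv[of 0 A 0 x] by (auto simp: pm_def pv_def)

lemma spv_mv: "pm A \<Longrightarrow> spv x \<Longrightarrow> spv (A *v x)"
  using ledg_mv[of 0 A "-1" x] by (auto simp: pm_def spv_def)

lemma pm_mm: "pm A \<Longrightarrow> pm B \<Longrightarrow> pm (A ** B)"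
  using ledg_mm[of 0 A 0 B] by (auto simp: pm_def)

lemma pv_add: "pv x \<Longrightarrow> pv y \<Longrightarrow> pv (x+y)" by (auto simp: pv_def intro: ledg_add)
lemma pv_scale: "ledg 0 q \<Longrightarrow> pv x \<Longrightarrow> pv (q *s x)" using ledg_mult[of 0 q 0] by (auto simp: pv_def)
lemma spv_add: "spv x \<Longrightarrow> spv y \<Longrightarrow> spv (x+y)" by (auto simp: spv_def intro: ledg_add)
lemma spv_uminus: "spv (-x) \<longleftrightarrow> spv x" by (auto simp: spv_def ledg_uminus)
lemma spv_0[simp]: "spv 0" by (simp add: spv_def)
lemma pv_0[simp]: "pv 0" by (simp add: pv_def)
lemma spv_scale: "ledg 0 q \<Longrightarrow> spv x \<Longrightarrow> spv (q *s x)" using ledg_mult[of 0 q "-1"] by (auto simp: spv_def)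

lemma mv_scale: "(A::'a::comm_ring_1^'n^'m) *v (c *s x) = c *s (A *v x)"
  by (simp add: vec_eq_iff matrix_vector_mult_def sum_distrib_left algebra_simps)

lemma ppv_add: "pi_plus_vec (v + w) = pi_plus_vec v + pi_plus_vec w"
  by (simp add: pi_plus_vec_def vec_eq_iff pi_plus_add)
lemma ppv_diff: "pi_plus_vec (v - w) = pi_plus_vec v - pi_plus_vec w"
  by (simp add: pi_plus_vec_def vec_eq_iff pi_plus_diff)
lemma ppv_zero_iff: "pi_plus_vec v = 0 \<longleftrightarrow> spv v"
  by (simp add: pi_plus_vec_def vec_eq_iff pi_plus_sp_iff spv_def)
lemma spv_ppv: "spv (v - pi_plus_vec v)"
  by (simp add: pi_plus_vec_def spv_def sp_pi_plus)


lemma emb_sum: "emb (sum f S) = (\<Sum>i\<in>S. emb (f i))"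
  by (induction S rule: infinite_finite_induct) (auto simp: emb_add)
lemma emb_prod: "emb (prod f S) = (\<Prod>i\<in>S. emb (f i))"
  by (induction S rule: infinite_finite_induct) (auto simp: emb_mult)
lemma emb_of_nat: "emb (of_nat n) = of_nat n"
  by (induction n) (auto simp: emb_add)
lemma emb_of_int: "emb (of_int k) = of_int k"
proof (cases "k \<ge> 0")
  case True then obtain n where "k = int n" by (metis nonneg_eq_int)
  thus ?thesis by (simp add: emb_of_nat)
next
  case False then obtain n where "k = - int n" by (metis nonpos_int_cases not_le order.strict_implies_order)
  thus ?thesis by (simp add: emb_of_nat emb_uminus)
qed

lemma det_emb: "det (emb_mat L) = emb (det L)"
  unfolding det_def emb_sum
  by (rule sum.cong[OF refl]) (simp only: emb_mult emb_prod emb_of_int emb_mat_def vec_lambda_beta)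

lemma inv_props:
  assumes "invertible (A::'a::field^'n^'n)"
  shows "A ** matrix_inv A = mat 1" "matrix_inv A ** A = mat 1"
proof -
  have "\<exists>A'. A ** A' = mat 1 \<and> A' ** A = mat 1" using assms invertible_def by blast
  from someI_ex[OF this] show "A ** matrix_inv A = mat 1" "matrix_inv A ** A = mat 1"
    unfolding matrix_inv_def by auto
qed

lemma inv_emb:
  assumes "det L \<noteq> 0" shows "invertible (emb_mat L)"
  using assms by (simp add: invertible_det_nz det_emb emb_nz)

lemma mv_cancel: "A ** B = mat 1 \<Longrightarrow> A *v (B *v x) = x"
  by (simp add: matrix_vector_mul_assoc)

lemma rho_e_eq: "rho_e = rho"
  by (intro ext) (simp add: rho_e_def rho_def)

context
  fixes L :: "'a::field poly ^'n^'n"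
  assumes dL: "det L \<noteq> 0"
begin

lemma rho_alt:
  "rho L x = x - emb_mat L *v ((matrix_inv (emb_mat L) *v x) - pi_plus_vec (matrix_inv (emb_mat L) *v x))"
  using inv_props[OF inv_emb[OF dL]]
  by (simp add: rho_def matrix_vector_mult_diff_distrib mv_cancel)

lemma rho_add: "rho L (x + y) = rho L x + rho L y"
  by (simp add: rho_def matrix_vector_right_distrib ppv_add)

lemma rho_diff: "rho L (x - y) = rho L x - rho L y"
  by (simp add: rho_def matrix_vector_mult_diff_distrib ppv_diff)

lemma rho_0[simp]: "rho L 0 = 0"
  using rho_diff[of 0 0] by simp

lemma rho_zero_iff: "rho L x = 0 \<longleftrightarrow> spv (matrix_inv (emb_mat L) *v x)"
proof
  assume h: "rho L x = 0"
  have "matrix_inv (emb_mat L) *v (rho L x) = pi_plus_vec (matrix_inv (emb_mat L) *v x)"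
    using inv_props[OF inv_emb[OF dL]] by (simp add: rho_def mv_cancel)
  with h show "spv (matrix_inv (emb_mat L) *v x)" by (simp add: ppv_zero_iff)
qed (simp add: rho_def ppv_zero_iff[symmetric])

lemma rho_eq_iff: "rho L x = rho L y \<longleftrightarrow> spv (matrix_inv (emb_mat L) *v (x - y))"
  using rho_zero_iff[of "x - y"] rho_diff[of x y] by auto

lemma rho_sum: "rho L (sum f S) = (\<Sum>i\<in>S. rho L (f i))"
  by (induction S rule: infinite_finite_induct) (auto simp: rho_add)

lemma act_rho:
  assumes "pv x" "ledg 0 q"
  shows "act L q (rho L x) = rho L (q *s x)"
proof -
  let ?P = "\<lambda>y. y \<in> proper_vecs \<and> rho L y = rho L x"
  have "?P x" using assms by (simp add: proper_vecs_iff)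
  hence "?P (SOME y. ?P y)" by (rule someI)
  then obtain y where y: "(SOME y. ?P y) = y" "rho L y = rho L x" by blast
  hence "spv (matrix_inv (emb_mat L) *v (y - x))" using rho_eq_iff by blast
  hence "spv (q *s (matrix_inv (emb_mat L) *v (y - x)))"
    using spv_scale[OF assms(2)] by blast
  moreover have "matrix_inv (emb_mat L) *v (q *s y - q *s x) = q *s (matrix_inv (emb_mat L) *v (y - x))"
    by (simp only: vector_ssub_ldistrib[symmetric] mv_scale)
  ultimately have "spv (matrix_inv (emb_mat L) *v (q *s y - q *s x))" by (simp only:)
  hence "rho L (q *s y) = rho L (q *s x)" using rho_eq_iff by blast
  thus ?thesis using y by (simp add: act_def)
qed

end


lemma mv_uminus: "(A::'a::comm_ring_1^'n^'m) *v (- x) = - (A *v x)"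
  by (simp add: vec_eq_iff matrix_vector_mult_def sum_negf)

lemma moreover_part:
  fixes L :: "'a::field poly ^'n^'n" and L1 :: "'a poly ^'m^'m"
  assumes dL: "det L \<noteq> 0" and dL1: "det L1 \<noteq> 0"
    and T: "pm T" "pm T1" "T ** emb_mat L = emb_mat L1 ** T1"
  shows "rho L1 (T *v rho L x) = rho L1 (T *v x)"
proof -
  let ?Li = "matrix_inv (emb_mat L)" and ?L1i = "matrix_inv (emb_mat L1)"
  define w where "w = ?Li *v x - pi_plus_vec (?Li *v x)"
  have w: "spv w" unfolding w_def by (rule spv_ppv)
  have e1: "rho L x - x = - (emb_mat L *v w)" unfolding w_def rho_alt[OF dL] by simp
  have "T *v rho L x - T *v x = T *v (rho L x - x)" by (simp only: matrix_vector_mult_diff_distrib)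
  also have "\<dots> = - (T *v (emb_mat L *v w))" by (simp only: e1 mv_uminus)
  also have "\<dots> = - (emb_mat L1 *v (T1 *v w))" by (simp only: matrix_vector_mul_assoc T(3))
  finally have "?L1i *v (T *v rho L x - T *v x) = - (?L1i *v (emb_mat L1 *v (T1 *v w)))"
    by (simp only: mv_uminus)
  hence e: "?L1i *v (T *v rho L x - T *v x) = - (T1 *v w)"
    using mv_cancel[OF inv_props(2)[OF inv_emb[OF dL1]]] by simp
  have "spv (T1 *v w)" using spv_mv[OF T(2) w] .
  thus ?thesis using rho_eq_iff[OF dL1] e spv_uminus by metis
qed

section \<open>The two directions modulo column reduction\<close>

lemma U_iff: "xb \<in> U L \<longleftrightarrow> (\<exists>x. pv x \<and> xb = rho L x)"
  by (auto simp: U_def proper_vecs_iff)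

lemma converse_dir:
  fixes L :: "'a::field poly ^'n^'n" and L1 :: "'a poly ^'m^'m"
    and \<phi> :: "'a ratf ^'n \<Rightarrow> 'a ratf ^'m"
  assumes dL: "det L \<noteq> 0" and dL1: "det L1 \<noteq> 0"
    and T: "pm T" "pm T1" "T ** emb_mat L = emb_mat L1 ** T1"
    and phi: "\<forall>xb\<in>U L. \<phi> xb = rho_e L1 (T *v xb)"
  shows "Kinf_module_hom L L1 \<phi>"
proof -
  have phx: "\<phi> (rho L x) = rho L1 (T *v x)" if "pv x" for x
  proof -
    have "rho L x \<in> U L" using that U_iff by blast
    thus ?thesis using phi moreover_part[OF dL dL1 T] by (simp add: rho_e_eq)
  qed
  show ?thesis unfolding Kinf_module_hom_def
  proof (intro conjI ballI allI impI)
    fix xb assume "xb \<in> U L"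
    then obtain x where x: "pv x" "xb = rho L x" using U_iff by blast
    have "\<phi> xb = rho L1 (T *v x)" using phx[OF x(1)] x(2) by simp
    thus "\<phi> xb \<in> U L1" using pv_mv[OF T(1) x(1)] U_iff by blast
  next
    fix xb yb assume "xb \<in> U L" "yb \<in> U L"
    obtain x where x: "pv x" "xb = rho L x" using U_iff \<open>xb \<in> U L\<close> by blast
    obtain y where y: "pv y" "yb = rho L y" using U_iff \<open>yb \<in> U L\<close> by blast
    have "xb + yb = rho L (x + y)" using x y rho_add[OF dL] by simp
    thus "\<phi> (xb + yb) = \<phi> xb + \<phi> yb"
      using phx x y pv_add[OF x(1) y(1)] rho_add[OF dL1] by (simp add: matrix_vector_right_distrib)
  next
    fix q :: "'a ratf" and xb assume h: "proper q \<and> xb \<in> U L"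
    then obtain x where x: "pv x" "xb = rho L x" using U_iff by blast
    have q: "ledg 0 q" using h proper_iff by blast
    have "act L q xb = rho L (q *s x)" using act_rho[OF dL x(1) q] x by simp
    hence "\<phi> (act L q xb) = rho L1 (q *s (T *v x))" using phx[OF pv_scale[OF q x(1)]] by (simp add: mv_scale)
    also have "\<dots> = act L1 q (rho L1 (T *v x))" using act_rho[OF dL1 pv_mv[OF T(1) x(1)] q] by simp
    finally show "\<phi> (act L q xb) = act L1 q (\<phi> xb)" using phx x by simp
  qed
qed

lemma pv_sum: "(\<And>i. i \<in> S \<Longrightarrow> pv (f i)) \<Longrightarrow> pv (sum f S)"
  by (induction S rule: infinite_finite_induct) (auto intro: pv_add)

lemma pv_axis: "pv (axis i (1::'a::field ratf))"
  by (auto simp: pv_def axis_def ledg_cst[of 1, simplified])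

lemma forward_T:
  fixes L :: "'a::field poly ^'n^'n" and L1 :: "'a poly ^'m^'m"
    and \<phi> :: "'a ratf ^'n \<Rightarrow> 'a ratf ^'m"
  assumes dL: "det L \<noteq> 0" and dL1: "det L1 \<noteq> 0"
    and hom: "Kinf_module_hom L L1 \<phi>"
  shows "\<exists>T::'a ratf^'n^'m. pm T \<and> (\<forall>x. pv x \<longrightarrow> \<phi> (rho L x) = rho L1 (T *v x))"
proof -
  have inU: "\<And>xb. xb \<in> U L \<Longrightarrow> \<phi> xb \<in> U L1"
    and add: "\<And>xb yb. xb \<in> U L \<Longrightarrow> yb \<in> U L \<Longrightarrow> \<phi> (xb + yb) = \<phi> xb + \<phi> yb"
    and act: "\<And>(q::'a ratf) xb. proper q \<Longrightarrow> xb \<in> U L \<Longrightarrow> \<phi> (act L q xb) = act L1 q (\<phi> xb)"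
    using hom unfolding Kinf_module_hom_def by blast+
  have rU: "pv x \<Longrightarrow> rho L x \<in> U L" for x using U_iff by blast
  have z: "\<phi> 0 = 0"
  proof -
    have "(0::'a ratf^'n) \<in> U L" using rU[of 0] rho_0[OF dL] by simp
    from add[OF this this] show ?thesis by simp
  qed
  have "\<forall>i. \<exists>t. pv t \<and> rho L1 t = \<phi> (rho L (axis i 1))"
  proof
    fix i
    obtain t where "pv t" "\<phi> (rho L (axis i 1)) = rho L1 t" using inU[OF rU[OF pv_axis]] U_iff by blast
    thus "\<exists>t. pv t \<and> rho L1 t = \<phi> (rho L (axis i 1))" by auto
  qed
  then obtain th where "\<forall>i. pv (th i) \<and> rho L1 (th i) = \<phi> (rho L (axis i 1))"
    using choice[of "\<lambda>i t. pv t \<and> rho L1 t = \<phi> (rho L (axis i 1))"] by blast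
  hence th: "\<And>i. pv (th i)" "\<And>i. rho L1 (th i) = \<phi> (rho L (axis i 1))" by auto
  define T :: "'a ratf^'n^'m" where "T = (\<chi> k i. th i $ k)"
  have pmT: "pm T" using th(1) by (simp add: T_def pm_def pv_def)
  have key: "\<phi> (rho L (\<Sum>i\<in>S. x$i *s axis i 1)) = rho L1 (\<Sum>i\<in>S. x$i *s th i)" if "pv x" for x S
  proof (induction S rule: infinite_finite_induct)
    case (infinite S) thus ?case using z rho_0[OF dL] rho_0[OF dL1] by simp
  next
    case empty thus ?case using z rho_0[OF dL] rho_0[OF dL1] by simp
  next
    case (insert i F)
    have xi: "ledg 0 (x$i)" using that pv_def by blast
    have p1: "pv (x$i *s axis i 1)" using pv_scale[OF xi pv_axis] .
    have p2: "pv (\<Sum>i\<in>F. x$i *s axis i 1)"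
      by (rule pv_sum) (use that pv_def pv_scale pv_axis in blast)
    have "\<phi> (rho L (x$i *s axis i 1)) = \<phi> (act L (x$i) (rho L (axis i 1)))"
      using act_rho[OF dL pv_axis xi] by simp
    also have "\<dots> = act L1 (x$i) (\<phi> (rho L (axis i 1)))"
      using act[OF _ rU[OF pv_axis]] xi proper_iff by blast
    also have "\<dots> = act L1 (x$i) (rho L1 (th i))" using th(2) by simp
    also have "\<dots> = rho L1 (x$i *s th i)" using act_rho[OF dL1 th(1) xi] .
    finally have e1: "\<phi> (rho L (x$i *s axis i 1)) = rho L1 (x$i *s th i)" .
    have "\<phi> (rho L (\<Sum>i\<in>insert i F. x$i *s axis i 1))
        = \<phi> (rho L (x$i *s axis i 1) + rho L (\<Sum>i\<in>F. x$i *s axis i 1))"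
      using insert rho_add[OF dL] by simp
    also have "\<dots> = \<phi> (rho L (x$i *s axis i 1)) + \<phi> (rho L (\<Sum>i\<in>F. x$i *s axis i 1))"
      using add[OF rU[OF p1] rU[OF p2]] .
    also have "\<dots> = rho L1 (\<Sum>i\<in>insert i F. x$i *s th i)"
      using e1 insert rho_add[OF dL1] by simp
    finally show ?case .
  qed
  have "\<phi> (rho L x) = rho L1 (T *v x)" if "pv x" for x
  proof -
    have "T *v x = (\<Sum>i\<in>UNIV. x$i *s th i)"
      by (simp add: matrix_mult_sum T_def column_def)
    thus ?thesis using key[OF that, of UNIV] by (simp add: basis_expansion)
  qed
  thus ?thesis using pmT by blast
qed

lemma mv_axis: "((A::'a::comm_ring_1^'n^'m) *v axis j c)$k = A$k$j * c"
  by (simp add: matrix_vector_mult_def axis_def if_distrib cong: if_cong)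

definition dm :: "('n \<Rightarrow> 'a::field ratf) \<Rightarrow> 'a ratf^'n^'n" where
  "dm f = (\<chi> i k. if i = k then f i else 0)"

lemma mm_dm: "(A ** dm f)$r$k = A$r$k * f k"
  by (simp add: matrix_matrix_mult_def dm_def if_distrib cong: if_cong)

lemma sum_delta_left:
  fixes r :: "'n::finite" and g :: "'n \<Rightarrow> 'a::comm_ring_1"
  shows "(\<Sum>k\<in>UNIV. (if r = k then f k else 0) * g k) = f r * g r"
proof -
  have "(\<Sum>k\<in>UNIV. (if r = k then f k else 0) * g k) = (\<Sum>k\<in>UNIV. if r = k then f r * g r else 0)"
    by (rule sum.cong) auto
  also have "\<dots> = f r * g r" by (subst sum.delta') auto
  finally show ?thesis .
qed

lemma dm_mm: "(dm f ** A)$r$k = f r * A$r$k"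
  by (simp add: matrix_matrix_mult_def dm_def sum_delta_left)

lemma dm_mv: "(dm f *v v)$r = f r * v$r"
  by (simp add: matrix_vector_mult_def dm_def sum_delta_left)

lemma dm_dm: "dm f ** dm g = dm (\<lambda>i. f i * g i)"
  by (simp add: vec_eq_iff mm_dm) (simp add: dm_def)

lemma dm_1: "dm (\<lambda>i. 1) = mat 1"
  by (simp add: dm_def mat_def)

lemma pm_dm: "(\<And>i. ledg 0 (f i)) \<Longrightarrow> pm (dm f)"
  by (simp add: pm_def dm_def)

lemma pm_mat1: "pm (mat 1 :: 'a::field ratf^'n^'n)"
  by (simp add: pm_def mat_def ledg_cst[of 1, simplified])

lemma ledg_of_int_sign: "ledg 0 (of_int (sign p) :: 'a::field ratf)"
  by (cases p rule: sign_cases) (simp_all add: ledg_uminus ledg_cst[of 1, simplified])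

lemma ledg_det: "pm (A::'a::field ratf^'n^'n) \<Longrightarrow> ledg 0 (det A)"
  unfolding det_def pm_def
proof (intro ledg_sum)
  fix p assume "\<forall>i j. ledg 0 (A$i$j)"
  hence "ledg 0 (\<Prod>i\<in>UNIV. A$i$p i)" by (intro ledg_prod) blast
  thus "ledg 0 (of_int (sign p) * (\<Prod>i\<in>UNIV. A$i$p i))"
    using ledg_mult[OF ledg_of_int_sign] by fastforce
qed

definition evm :: "'a::field ratf^'n^'m \<Rightarrow> 'a^'n^'m" where
  "evm A = (\<chi> i j. ev (A$i$j))"

lemma ev_of_int_sign: "ev (of_int (sign p) :: 'a::field ratf) = of_int (sign p)"
proof (cases p rule: sign_cases)
  case even thus ?thesis by simp
next
  case odd thus ?thesis using ev_uminus[of "1::'a ratf"] ledg_cst[of "1::'a", simplified] by simp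
qed

lemma ev_det: "pm (A::'a::field ratf^'n^'n) \<Longrightarrow> ev (det A) = det (evm A)"
  unfolding det_def pm_def
  apply (subst ev_sum)
   apply (metis (no_types, lifting) add_0 ledg_mult ledg_of_int_sign ledg_prod)
  apply (rule sum.cong[OF refl])
  apply (subst ev_mult)
    apply (rule ledg_of_int_sign)
   apply (simp add: ledg_prod)
  apply (simp add: ev_prod ev_of_int_sign evm_def)
  done

lemma inv_unique:
  assumes "(A::'a::field^'n^'n) ** X = mat 1" shows "matrix_inv A = X" "invertible A"
proof -
  have X: "X ** A = mat 1" using assms matrix_left_right_inverse by blast
  thus inv: "invertible A" using assms invertible_def by blast
  have "matrix_inv A = (matrix_inv A ** A) ** X" using assms by (simp add: matrix_mul_assoc[symmetric])
  thus "matrix_inv A = X" using inv_props(2)[OF inv] by simp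
qed

definition bp :: "'a::field ratf^'n^'n \<Rightarrow> bool" where
  "bp B \<longleftrightarrow> invertible B \<and> pm B \<and> pm (matrix_inv B)"

lemma bp_criterion:
  assumes pmH: "pm (H::'a::field ratf^'n^'n)" and d: "det (evm H) \<noteq> 0"
  shows "bp H"
proof -
  have l0: "ledg 0 (det H)" using ledg_det[OF pmH] .
  have e: "ev (det H) \<noteq> 0" using ev_det[OF pmH] d by simp
  have dnz: "det H \<noteq> 0" and ldi: "ledg 0 (inverse (det H))" using ev_nz[OF l0 e] by auto
  have inv: "invertible H" using dnz invertible_det_nz by blast
  have "ledg 0 (matrix_inv H $ k $ j)" for k j
  proof -
    have "H *v (matrix_inv H *v axis j 1) = axis j 1"
      using inv_props(1)[OF inv] by (simp add: matrix_vector_mul_assoc)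
    hence eq: "matrix_inv H *v axis j 1 = (\<chi> k. det (\<chi> i l. if l = k then axis j 1 $ i else H$i$l) / det H)"
      using cramer[OF dnz] by blast
    have "matrix_inv H $ k $ j = det (\<chi> i l. if l = k then axis j 1 $ i else H$i$l) * inverse (det H)"
      using arg_cong[OF eq, of "\<lambda>v. v $ k"] mv_axis[of "matrix_inv H" j 1 k] by (simp add: divide_inverse)
    moreover have "pm (\<chi> i l. if l = k then axis j (1::'a ratf) $ i else H$i$l)"
      using pmH by (auto simp: pm_def axis_def ledg_cst[of 1, simplified])
    ultimately show ?thesis using ledg_mult[OF ledg_det ldi] by simp
  qed
  thus ?thesis using inv pmH by (simp add: bp_def pm_def)
qed

lemma bp_mult:
  assumes "bp A" "bp B" shows "bp (A ** B)"
proof -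
  have iA: "invertible A" and iB: "invertible B" using assms bp_def by auto
  have "(A ** B) ** (matrix_inv B ** matrix_inv A) = mat 1"
    using inv_props(1)[OF iA] inv_props(1)[OF iB]
    by (metis matrix_mul_assoc matrix_mul_rid)
  hence "matrix_inv (A ** B) = matrix_inv B ** matrix_inv A" "invertible (A ** B)" using inv_unique by auto
  thus ?thesis using assms by (simp add: bp_def pm_mm)
qed

lemma bp_mat1: "bp (mat 1 :: 'a::field ratf^'n^'n)"
proof -
  have "(mat 1 :: 'a ratf^'n^'n) ** mat 1 = mat 1" by simp
  from inv_unique[OF this] show ?thesis using pm_mat1[where 'a='a and 'n='n] by (simp add: bp_def)
qed

lemma bp_det:
  assumes "bp B" shows "det B \<noteq> 0" "dg (det B) = 0"
proof -
  have iB: "invertible B" and p: "pm B" "pm (matrix_inv B)" using assms bp_def by auto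
  have "det B * det (matrix_inv B) = 1" using inv_props(1)[OF iB] by (metis det_I det_mul)
  hence nz: "det B \<noteq> 0" "det (matrix_inv B) \<noteq> 0" by auto
  have "dg (det B) + dg (det (matrix_inv B)) = 0"
    using dg_mult[OF nz] \<open>det B * _ = 1\<close> dg_emb[of "1::'a poly"] by simp
  moreover have "dg (det B) \<le> 0" "dg (det (matrix_inv B)) \<le> 0"
    using ledg_det[OF p(1)] ledg_det[OF p(2)] nz by (auto simp: ledg_def)
  ultimately show "det B \<noteq> 0" "dg (det B) = 0" using nz by auto
qed

section \<open>Column reduction\<close>

definition cd :: "'a::field ratf^'n^'n \<Rightarrow> 'n \<Rightarrow> int" where
  "cd M j = Max ((\<lambda>i. dg (M$i$j)) ` {i. M$i$j \<noteq> 0})"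

lemma cd_ub: "ledg (cd M j) (M$i$j)"
  unfolding ledg_def cd_def by (cases "M$i$j = 0") (auto intro!: Max_ge)

lemma cd_le: "M$i0$j \<noteq> 0 \<Longrightarrow> (\<And>i. ledg k (M$i$j)) \<Longrightarrow> cd M j \<le> k"
  unfolding cd_def ledg_def by (subst Max_le_iff) auto

lemma cd_cong: "(\<And>i. M$i$j = N$i$k) \<Longrightarrow> cd M j = cd N k"
  unfolding cd_def by simp

lemma inv_colnz:
  assumes "invertible (M::'a::field ratf^'n^'n)" shows "\<exists>i. M$i$j \<noteq> 0"
proof (rule ccontr)
  assume "\<not> ?thesis"
  hence "M *v axis j 1 = 0" by (simp add: vec_eq_iff mv_axis)
  hence "matrix_inv M *v (M *v axis j 1) = 0" by simp
  hence "axis j (1::'a ratf) = 0" using mv_cancel[OF inv_props(2)[OF assms]] by simp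
  thus False by (metis axis_nth one_neq_zero zero_index)
qed

definition hm :: "'a::field ratf^'n^'n \<Rightarrow> 'a ratf^'n^'n" where
  "hm M = M ** dm (\<lambda>j. xp (- cd M j))"

lemma pm_hm: "pm (hm M)"
  unfolding pm_def hm_def mm_dm
proof (intro allI)
  fix i j show "ledg 0 (M$i$j * xp (- cd M j))" using ledg_mult_xp[OF cd_ub[of M j i], of "- cd M j"] by simp
qed

lemma M_eq: "M = hm M ** dm (\<lambda>j. xp (cd M j))"
  unfolding hm_def matrix_mul_assoc[symmetric] dm_dm xp_add[symmetric] by (simp add: dm_1)

lemma hm_entry: "M$i$r = hm M $i$r * xp (cd M r)"
  by (subst M_eq) (simp add: mm_dm)

definition meas :: "'a::field ratf^'n^'n \<Rightarrow> int" where
  "meas M = (\<Sum>j\<in>UNIV. cd M j)"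

lemma prod_xp: "(\<Prod>j\<in>S. xp (f j)) = xp (\<Sum>j\<in>S. f j)"
  by (induction S rule: infinite_finite_induct) (auto simp: xp_add)

lemma det_dm: "det (dm f) = (\<Prod>i\<in>UNIV. f i)"
  by (subst det_diagonal) (auto simp: dm_def)

lemma meas_ge:
  assumes "invertible (M::'a::field ratf^'n^'n)" shows "dg (det M) \<le> meas M"
proof -
  have "det M = det (hm M) * xp (meas M)"
    by (subst M_eq) (simp add: det_mul det_dm prod_xp meas_def)
  moreover have "det M \<noteq> 0" using assms invertible_det_nz by blast
  ultimately have nz: "det (hm M) \<noteq> 0" by auto
  have "dg (det M) = dg (det (hm M)) + meas M"
    using \<open>det M = _\<close> dg_mult[OF nz xp_nz] dg_xp by simp
  moreover have "dg (det (hm M)) \<le> 0" using ledg_det[OF pm_hm[of M]] nz by (simp add: ledg_def)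
  ultimately show ?thesis by simp
qed

lemma kernel_vec:
  assumes "det (A::'a::field^'n^'n) = 0" shows "\<exists>c. c \<noteq> 0 \<and> A *v c = 0"
proof -
  have "\<not> inj ((*v) A)"
    using det_nz_iff_inj_gen[of "(*v) A"] assms matrix_vector_mul_linear_gen by simp
  then obtain x y where "x \<noteq> y" "A *v x = A *v y" unfolding inj_on_def by blast
  thus ?thesis by (intro exI[of _ "x - y"]) (simp add: matrix_vector_mult_diff_distrib)
qed

lemma col_repl:
  fixes v :: "'a::field^'n"
  shows "det (\<chi> i k. if k = j then v$i else (mat 1::'a^'n^'n)$i$k) = v$j"
proof -
  have "det (\<chi> i k. if k = j then (mat 1 *v v)$i else (mat 1::'a^'n^'n)$i$k) = v$j * det (mat 1::'a^'n^'n)"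
    by (rule cramer_lemma)
  thus ?thesis by (simp only: matrix_vector_mul_lid det_I mult_1_right)
qed

lemma reduce_step:
  fixes M :: "'a::field ratf^'n^'n"
  assumes invM: "invertible M" and d0: "det (evm (hm M)) = 0"
  shows "\<exists>T. bp T \<and> meas (M ** T) < meas M"
proof -
  define H where "H = hm M"
  define d where "d = cd M"
  obtain c where c: "c \<noteq> 0" "evm H *v c = 0" using kernel_vec d0 H_def by blast
  define J where "J = {i. c$i \<noteq> 0}"
  have J: "finite J" "J \<noteq> {}" using c(1) by (auto simp: J_def vec_eq_iff)
  obtain j where j: "j \<in> J" "\<And>i. i \<in> J \<Longrightarrow> d j \<le> d i"
  proof -
    have "Min (d ` J) \<in> d ` J" using J by simp
    then obtain j where jj: "j \<in> J" "d j = Min (d ` J)" by auto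
    have "\<And>i. i \<in> J \<Longrightarrow> d j \<le> d i" using jj J by simp
    thus ?thesis using that jj by blast
  qed
  have cj: "c$j \<noteq> 0" using j(1) J_def by simp
  define u where "u r = cst (c$r / c$j) * xp (d j - d r)" for r
  define T :: "'a ratf^'n^'n" where "T = (\<chi> r k. if k = j then u r else (mat 1 :: 'a ratf^'n^'n)$r$k)"
  have pmT: "pm T"
    unfolding pm_def
  proof (intro allI)
    fix r k
    show "ledg 0 (T$r$k)"
    proof (cases "k = j")
      case True
      show ?thesis
      proof (cases "c$r = 0")
        case True thus ?thesis using \<open>k = j\<close> by (simp add: T_def u_def)
      next
        case False
        hence "d j \<le> d r" using j(2) J_def by simp
        hence lx: "ledg 0 (xp (d j - d r))" by (intro ledg_mono[OF ledg_xp]) simp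
        have "ledg 0 (u r)" using ledg_mult[OF ledg_cst lx] by (simp add: u_def)
        thus ?thesis using \<open>k = j\<close> by (simp add: T_def)
      qed
    next
      case False thus ?thesis by (simp add: T_def mat_def ledg_cst[of 1, simplified])
    qed
  qed
  have uj: "u j = 1" using cj by (simp add: u_def)
  have evT: "evm T = (\<chi> r k. if k = j then (\<chi> r. ev (u r))$r else (mat 1 :: 'a^'n^'n)$r$k)"
    by (simp add: evm_def T_def mat_def vec_eq_iff)
  have "det (evm T) = 1"
    using col_repl[of j "\<chi> r. ev (u r)"] evT uj by simp
  hence bpT: "bp T" using bp_criterion[OF pmT] by simp
  have invMT: "invertible (M ** T)" using invM bpT bp_def invertible_mult by blast
  have colk: "(M ** T)$i$k = M$i$k" if "k \<noteq> j" for i k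
  proof -
    have "(M ** T)$i$k = (M ** mat 1)$i$k"
      unfolding matrix_matrix_mult_def using that by (simp add: T_def)
    thus ?thesis by simp
  qed
  define cv :: "'a ratf^'n" where "cv = (\<chi> r. cst (c$r))"
  define w where "w = H *v cv"
  have pcv: "pv cv" by (simp add: pv_def cv_def ledg_cst)
  have spw: "sp (w$i)" for i
  proof -
    have pw: "ledg 0 (w$i)" using pv_mv[OF pm_hm[of M] pcv] by (simp add: w_def H_def pv_def)
    have "ev (w$i) = (\<Sum>r\<in>UNIV. ev (H$i$r * cv$r))"
      unfolding w_def matrix_vector_mult_def vec_lambda_beta
    proof (rule ev_sum)
      fix r
      have "ledg 0 (H$i$r)" using pm_hm[of M] by (simp add: H_def pm_def)
      moreover have "ledg 0 (cv$r)" using pcv by (simp add: pv_def)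
      ultimately show "ledg 0 (H$i$r * cv$r)" using ledg_mult[of 0 _ 0] by fastforce
    qed
    also have "\<dots> = (evm H *v c)$i"
      using pm_hm[of M] by (simp add: matrix_vector_mult_def evm_def ev_mult cv_def H_def pm_def ledg_cst)
    finally have "ev (w$i) = 0" using c(2) by simp
    thus ?thesis using sp_of_ev0 pw by blast
  qed
  have colj: "(M ** T)$i$j = xp (d j) * cst (inverse (c$j)) * w$i" for i
  proof -
    have "(M ** T)$i$j = (\<Sum>r\<in>UNIV. M$i$r * u r)" by (simp add: matrix_matrix_mult_def T_def)
    also have "\<dots> = (\<Sum>r\<in>UNIV. xp (d j) * cst (inverse (c$j)) * (H$i$r * cv$r))"
    proof (rule sum.cong[OF refl])
      fix r
      have xpid: "xp (d r) * xp (d j - d r) = xp (d j)" by (subst xp_add[symmetric]) simp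
      have e1: "cst (c$r / c$j) = cst (c$r) * cst (inverse (c$j))" by (simp add: divide_inverse cst_mult)
      have "M$i$r * u r = (H$i$r * xp (d r)) * (cst (c$r) * cst (inverse (c$j)) * xp (d j - d r))"
        using hm_entry[of M i r] by (simp add: u_def H_def d_def e1)
      also have "\<dots> = (H$i$r * cst (c$r)) * cst (inverse (c$j)) * (xp (d r) * xp (d j - d r))"
        by (simp add: ac_simps)
      also have "\<dots> = xp (d j) * cst (inverse (c$j)) * (H$i$r * cv$r)"
        by (simp only: xpid) (simp add: ac_simps cv_def)
      finally show "M$i$r * u r = xp (d j) * cst (inverse (c$j)) * (H$i$r * cv$r)" .
    qed
    also have "\<dots> = xp (d j) * cst (inverse (c$j)) * w$i"
      by (simp add: w_def matrix_vector_mult_def sum_distrib_left)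
    finally show ?thesis .
  qed
  have "ledg (d j - 1) ((M ** T)$i$j)" for i
  proof -
    have "ledg ((d j + 0) + -1) (xp (d j) * cst (inverse (c$j)) * w$i)"
      by (intro ledg_mult ledg_xp ledg_cst spw)
    thus ?thesis using colj by simp
  qed
  moreover obtain i0 where "(M ** T)$i0$j \<noteq> 0" using inv_colnz[OF invMT] by blast
  ultimately have cdj: "cd (M ** T) j < d j" using cd_le by fastforce
  have cdk: "cd (M ** T) k = d k" if "k \<noteq> j" for k
    using cd_cong[of "M ** T" k M k] colk[OF that] by (simp add: d_def)
  have "meas (M ** T) < meas M"
    unfolding meas_def
  proof (rule sum_strict_mono_ex1)
    show "\<forall>x\<in>UNIV. cd (M ** T) x \<le> cd M x" using cdj cdk d_def by (metis order.refl less_imp_le)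
    show "\<exists>a\<in>UNIV. cd (M ** T) a < cd M a" using cdj d_def by blast
  qed simp
  thus ?thesis using bpT by blast
qed

lemma dg_det_bp:
  assumes "invertible (M::'a::field ratf^'n^'n)" "bp B"
  shows "dg (det (M ** B)) = dg (det M)"
proof -
  have "det M \<noteq> 0" using assms(1) invertible_det_nz by blast
  thus ?thesis using bp_det[OF assms(2)] by (simp add: det_mul dg_mult)
qed

lemma col_red:
  fixes M :: "'a::field ratf^'n^'n" assumes invM: "invertible M"
  shows "\<exists>B H d. bp B \<and> bp H \<and> M ** B = H ** dm (\<lambda>j. xp (d j))"
proof -
  define mu where "mu B = nat (meas (M ** B) - dg (det M))" for B :: "'a ratf^'n^'n"
  obtain B0 where B0: "bp B0" "\<And>B. bp B \<Longrightarrow> mu B0 \<le> mu B"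
    using ex_has_least_nat[of bp "mat 1" mu] bp_mat1 by blast
  define M0 where "M0 = M ** B0"
  have invM0: "invertible M0" using invM B0(1) bp_def invertible_mult M0_def by blast
  show ?thesis
  proof (cases "det (evm (hm M0)) = 0")
    case False
    hence "bp (hm M0)" using bp_criterion pm_hm by blast
    thus ?thesis using M_eq[of M0] B0(1) M0_def by blast
  next
    case True
    obtain T where T: "bp T" "meas (M0 ** T) < meas M0" using reduce_step[OF invM0 True] by blast
    have bpBT: "bp (B0 ** T)" using bp_mult B0(1) T(1) by blast
    have invM0T: "invertible (M0 ** T)" using invM0 T(1) bp_def invertible_mult by blast
    have lb1: "dg (det M) \<le> meas M0" using meas_ge[OF invM0] dg_det_bp[OF invM B0(1)] M0_def by simp
    have lb2: "dg (det M) \<le> meas (M0 ** T)"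
      using meas_ge[OF invM0T] dg_det_bp[OF invM0 T(1)] dg_det_bp[OF invM B0(1)] M0_def by simp
    have "M ** (B0 ** T) = M0 ** T" by (simp add: M0_def matrix_mul_assoc)
    hence "mu (B0 ** T) < mu B0" using T(2) lb1 lb2 by (simp add: mu_def M0_def)
    thus ?thesis using B0(2)[OF bpBT] by simp
  qed
qed

lemma dm_mv_axis: "dm f *v axis i a = axis i (f i * a)"
  by (simp add: vec_eq_iff dm_mv axis_def)

lemma spv_axis: "sp a \<Longrightarrow> spv (axis i a)"
  by (simp add: spv_def axis_def)

lemma pv_axis_gen: "ledg 0 a \<Longrightarrow> pv (axis i a)"
  by (simp add: pv_def axis_def)

lemma forward_dir:
  fixes L :: "'a::field poly ^'n^'n" and L1 :: "'a poly ^'m^'m"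
    and \<phi> :: "'a ratf ^'n \<Rightarrow> 'a ratf ^'m"
  assumes dL: "det L \<noteq> 0" and dL1: "det L1 \<noteq> 0"
    and hom: "Kinf_module_hom L L1 \<phi>"
  shows "\<exists>(\<Theta>::'a ratf ^'n^'m) (\<Theta>1::'a ratf ^'n^'m).
               proper_mat \<Theta> \<and> proper_mat \<Theta>1 \<and> \<Theta> ** emb_mat L = emb_mat L1 ** \<Theta>1 \<and>
               (\<forall>xb\<in>U L. \<phi> xb = rho_e L1 (\<Theta> *v xb))"
proof -
  obtain T :: "'a ratf^'n^'m" where pmT: "pm T"
    and phT: "\<And>x. pv x \<Longrightarrow> \<phi> (rho L x) = rho L1 (T *v x)"
    using forward_T[OF dL dL1 hom] by blast
  define Lm where "Lm = emb_mat L"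
  define L1m where "L1m = emb_mat L1"
  define Li where "Li = matrix_inv Lm"
  define L1i where "L1i = matrix_inv L1m"
  have iLm: "invertible Lm" using inv_emb[OF dL] Lm_def by simp
  have iL1m: "invertible L1m" using inv_emb[OF dL1] L1m_def by simp
  obtain B H d where BH: "bp B" "bp H" "Lm ** B = H ** dm (\<lambda>j. xp (d j))"
    using col_red[OF iLm] by blast
  define D :: "'a ratf^'n^'n" where "D = dm (\<lambda>j. xp (d j))"
  define D' :: "'a ratf^'n^'n" where "D' = dm (\<lambda>j. xp (- d j))"
  define Hi where "Hi = matrix_inv H"
  define Bi where "Bi = matrix_inv B"
  have DD': "D ** D' = mat 1" unfolding D_def D'_def dm_dm xp_add[symmetric] by (simp add: dm_1)
  have iH: "invertible H" and pmH: "pm H" and pmHi: "pm Hi" using BH(2) bp_def Hi_def by auto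
  have iB: "invertible B" and pmB: "pm B" and pmBi: "pm Bi" using BH(1) bp_def Bi_def by auto
  have LiH: "Li ** H = B ** D'"
  proof -
    have "Li ** H = Li ** (H ** (D ** D'))" using DD' by simp
    also have "\<dots> = (Li ** (Lm ** B)) ** D'" using BH(3) by (simp add: matrix_mul_assoc D_def)
    also have "\<dots> = B ** D'" using inv_props(2)[OF iLm] by (simp add: matrix_mul_assoc Li_def)
    finally show ?thesis .
  qed
  have HiL: "Hi ** Lm = D ** Bi"
  proof -
    have "Hi ** Lm = Hi ** Lm ** (B ** Bi)" using inv_props(1)[OF iB] by (simp add: Bi_def)
    also have "\<dots> = (Hi ** (Lm ** B)) ** Bi" by (simp add: matrix_mul_assoc)
    also have "\<dots> = D ** Bi" using BH(3) inv_props(2)[OF iH] by (simp add: matrix_mul_assoc Hi_def D_def)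
    finally show ?thesis .
  qed
  define G where "G = L1i ** T ** H"
  have kill: "spv (L1i *v (T *v y))" if "pv y" "spv (Li *v y)" for y
  proof -
    have "rho L y = 0" using rho_zero_iff[OF dL] that(2) by (simp add: Li_def Lm_def)
    hence "rho L1 (T *v y) = rho L1 (T *v 0)" using phT[OF that(1)] phT[of 0] rho_0[OF dL] by simp
    hence "rho L1 (T *v y) = 0" using rho_0[OF dL1] by simp
    thus ?thesis using rho_zero_iff[OF dL1] by (simp add: L1i_def L1m_def)
  qed
  have colgen: "sp (G$k$i * xp e)" if "e \<le> 0" "e - d i \<le> -1" for k i e
  proof -
    let ?y = "H *v axis i (xp e)"
    have py: "pv ?y" using pv_mv[OF pmH pv_axis_gen] ledg_mono[OF ledg_xp] that(1) by blast
    have "Li *v ?y = B *v axis i (xp (- d i) * xp e)"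
      by (simp add: matrix_vector_mul_assoc LiH D'_def matrix_vector_mul_assoc[symmetric] dm_mv_axis)
    also have "xp (- d i) * xp e = xp (e - d i)" by (subst xp_add[symmetric]) simp
    finally have "Li *v ?y = B *v axis i (xp (e - d i))" .
    moreover have "sp (xp (e - d i))" using ledg_mono[OF ledg_xp] that(2) by blast
    ultimately have "spv (Li *v ?y)" using spv_mv[OF pmB spv_axis] by simp
    hence "spv (L1i *v (T *v ?y))" using kill py by blast
    moreover have "L1i *v (T *v ?y) = G *v axis i (xp e)" by (simp add: G_def matrix_vector_mul_assoc matrix_mul_assoc)
    ultimately have "sp ((G *v axis i (xp e))$k)" by (simp add: spv_def)
    thus ?thesis by (simp only: mv_axis)
  qed
  have colA: "sp (G$k$i)" if "d i \<ge> 1" for k i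
    using colgen[of 0 i k] that by simp
  have colB: "ledg 0 (G$k$i * xp (d i))" if "d i \<le> 0" for k i
  proof -
    have "sp (G$k$i * xp (d i - 1))" using colgen[of "d i - 1" i k] that by simp
    hence "ledg (-1 + 1) (G$k$i * xp (d i - 1) * xp 1)" by (rule ledg_mult_xp)
    moreover have "G$k$i * xp (d i - 1) * xp 1 = G$k$i * xp (d i)"
      by (simp add: mult.assoc xp_add[symmetric])
    ultimately show ?thesis by simp
  qed
  define Em where "Em = dm (\<lambda>i. if d i \<le> 0 then 1 else (0::'a ratf))"
  define Th where "Th = T ** (H ** Em ** Hi)"
  define Th1 where "Th1 = L1i ** Th ** Lm"
  have pmEm: "pm Em" unfolding Em_def by (rule pm_dm) (simp add: ledg_cst[of 1, simplified])
  have pmTh: "pm Th" unfolding Th_def using pmT pmH pmEm pmHi by (intro pm_mm)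
  have eqTh: "Th ** Lm = L1m ** Th1"
    using inv_props(1)[OF iL1m] by (simp add: Th1_def L1i_def matrix_mul_assoc)
  have "Th1 = G ** Em ** (Hi ** Lm)" by (simp add: Th1_def Th_def G_def matrix_mul_assoc)
  also have "\<dots> = (G ** (Em ** D)) ** Bi" by (simp add: HiL matrix_mul_assoc)
  finally have Th1e: "Th1 = (G ** dm (\<lambda>i. (if d i \<le> 0 then 1 else 0) * xp (d i))) ** Bi"
    by (simp add: Em_def D_def dm_dm)
  have "pm (G ** dm (\<lambda>i. (if d i \<le> 0 then 1 else 0) * xp (d i)))"
    unfolding pm_def mm_dm using colB by simp
  hence pmTh1: "pm Th1" using Th1e pm_mm pmBi by simp
  have phTh: "\<phi> (rho L x) = rho L1 (Th *v x)" if px: "pv x" for x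
  proof -
    define z where "z = Hi *v x"
    have pz: "pv z" using pv_mv[OF pmHi px] z_def by simp
    define q where "q = (\<chi> i. if d i \<le> 0 then 0 else z$i)"
    have xz: "x = H *v z" using inv_props(1)[OF iH] by (simp add: z_def Hi_def matrix_vector_mul_assoc)
    have Emz: "Em *v z = z - q" by (simp add: vec_eq_iff Em_def q_def dm_mv)
    have t1: "Th *v x = T *v (H *v (Em *v z))" by (simp add: Th_def z_def matrix_vector_mul_assoc matrix_mul_assoc)
    have t2: "T *v x = T *v (H *v z)" by (simp only: xz[symmetric])
    have "T *v x - Th *v x = T *v (H *v q)"
      unfolding t1 t2 Emz by (simp add: matrix_vector_mult_diff_distrib)
    hence e: "L1i *v (T *v x - Th *v x) = G *v q" by (simp add: G_def matrix_vector_mul_assoc matrix_mul_assoc)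
    have "spv (G *v q)"
      unfolding spv_def matrix_vector_mult_def vec_lambda_beta
    proof (intro allI ledg_sum)
      fix k i
      show "sp (G$k$i * q$i)"
      proof (cases "d i \<le> 0")
        case True thus ?thesis by (simp add: q_def)
      next
        case False
        hence "sp (G$k$i)" using colA by simp
        moreover have "ledg 0 (z$i)" using pz pv_def by blast
        ultimately show ?thesis using ledg_mult[of "-1" _ 0] False by (fastforce simp: q_def)
      qed
    qed
    hence "rho L1 (T *v x) = rho L1 (Th *v x)" using rho_eq_iff[OF dL1] e by (simp add: L1i_def L1m_def)
    thus ?thesis using phT[OF px] by simp
  qed
  show ?thesis
  proof (intro exI conjI)
    show "proper_mat Th" "proper_mat Th1" using pmTh pmTh1 by (simp_all add: proper_mat_iff)
    show "Th ** emb_mat L = emb_mat L1 ** Th1" using eqTh by (simp add: Lm_def L1m_def)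
    show "\<forall>xb\<in>U L. \<phi> xb = rho_e L1 (Th *v xb)"
    proof
      fix xb assume "xb \<in> U L"
      then obtain x where x: "pv x" "xb = rho L x" using U_iff by blast
      have "\<phi> xb = rho L1 (Th *v x)" using phTh[OF x(1)] x(2) by simp
      also have "\<dots> = rho L1 (Th *v rho L x)"
        using moreover_part[OF dL dL1 pmTh pmTh1, of x] eqTh by (simp add: Lm_def L1m_def)
      finally show "\<phi> xb = rho_e L1 (Th *v xb)" using x(2) by (simp add: rho_e_eq)
    qed
  qed
qed

theorem theorem3p3:
  fixes L :: "'a::field poly ^'n^'n" and L1 :: "'a poly ^'m^'m"
    and \<phi> :: "'a ratf ^'n \<Rightarrow> 'a ratf ^'m"
  assumes "det L \<noteq> 0" and "det L1 \<noteq> 0"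
  shows "(Kinf_module_hom L L1 \<phi> \<longleftrightarrow>
            (\<exists>(\<Theta>::'a ratf ^'n^'m) (\<Theta>1::'a ratf ^'n^'m).
               proper_mat \<Theta> \<and> proper_mat \<Theta>1 \<and> \<Theta> ** emb_mat L = emb_mat L1 ** \<Theta>1 \<and>
               (\<forall>xb\<in>U L. \<phi> xb = rho_e L1 (\<Theta> *v xb))))
       \<and> (\<forall>(\<Theta>::'a ratf ^'n^'m) (\<Theta>1::'a ratf ^'n^'m).
            proper_mat \<Theta> \<and> proper_mat \<Theta>1 \<and> \<Theta> ** emb_mat L = emb_mat L1 ** \<Theta>1 \<longrightarrow>
            (\<forall>x\<in>proper_vecs. rho_e L1 (\<Theta> *v rho L x) = rho L1 (\<Theta> *v x)))"
proof (intro conjI iffI allI impI ballI)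
  assume "Kinf_module_hom L L1 \<phi>"
  thus "\<exists>(\<Theta>::'a ratf ^'n^'m) (\<Theta>1::'a ratf ^'n^'m).
               proper_mat \<Theta> \<and> proper_mat \<Theta>1 \<and> \<Theta> ** emb_mat L = emb_mat L1 ** \<Theta>1 \<and>
               (\<forall>xb\<in>U L. \<phi> xb = rho_e L1 (\<Theta> *v xb))"
    using forward_dir[OF assms] by blast
next
  assume "\<exists>(\<Theta>::'a ratf ^'n^'m) (\<Theta>1::'a ratf ^'n^'m).
               proper_mat \<Theta> \<and> proper_mat \<Theta>1 \<and> \<Theta> ** emb_mat L = emb_mat L1 ** \<Theta>1 \<and>
               (\<forall>xb\<in>U L. \<phi> xb = rho_e L1 (\<Theta> *v xb))"
  then obtain T T1 :: "'a ratf ^'n^'m" where T: "proper_mat T" "proper_mat T1"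
    "T ** emb_mat L = emb_mat L1 ** T1" "\<forall>xb\<in>U L. \<phi> xb = rho_e L1 (T *v xb)" by blast
  show "Kinf_module_hom L L1 \<phi>"
    using converse_dir[OF assms _ _ T(3) T(4)] T(1,2) by (simp add: proper_mat_iff)
next
  fix T T1 :: "'a ratf ^'n^'m" and x :: "'a ratf^'n"
  assume T: "proper_mat T \<and> proper_mat T1 \<and> T ** emb_mat L = emb_mat L1 ** T1"
    and x: "x \<in> proper_vecs"
  show "rho_e L1 (T *v rho L x) = rho L1 (T *v x)"
    using moreover_part[OF assms, of T T1 x] T by (simp add: proper_mat_iff rho_e_eq)
qed


end
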